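(* Let $q(w)=w^4$, $\Psi[z:w:t]=[z:iw+t:it+w]$, and fix constants $0<\lambda<1$, $\tilde\lambda>1$ and integers $l,\tilde l\ge1$. For $(\alpha,\eta)\in\mathbb{C}^2$ let $G_{\alpha,\eta}(z,w):=(\lambda z+\alpha w+\eta q^l(z),q^l(w))$ and $F_\eta(z,w):=(\tilde\lambda z+\eta q^{\tilde l}(z),q^{\tilde l}(w))$, viewed as maps of $\mathbb{P}^2$ (holomorphic endomorphisms when $\eta\neq0$). There exist $\beta_1>0$, $\rho>0$ and $N\ge1$ such that for all $(\alpha,\eta)\in(\beta_1\mathbb{D}^* )^2$ the open set $U_\rho:=\{[z:w:t]\in\mathbb{P}^2:|z|<\rho\max(|w|,|t|)\}$ is a trapping region for $F_\eta\circ\Psi\circ G^N_{\alpha,\eta}$, i.e. $\overline{F_\eta\circ\Psi\circ G^N_{\alpha,\eta}(U_\rho)}\subset U_\rho$.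
   Context: $\mathbb{D}^*$ is the punctured unit disc, $\beta_1\mathbb{D}^*=\{z:0<|z|<\beta_1\}$. In the paper $\lambda,\tilde\lambda,l,\tilde l$ are the specific constants produced by the preceding construction, but only the stated ranges are used. *)

theory Defs
  imports "HOL-Analysis.Analysis"
begin

text \<open>Points of the projective plane P^2 are represented by their homogeneous
coordinates, i.e. nonzero triples (z,w,t) in C^3; maps of P^2 by homogeneous
polynomial lifts C^3 -> C^3.\<close>

type_synonym hc = "complex \<times> complex \<times> complex"

definition q :: "complex \<Rightarrow> complex" where
  "q w = w ^ 4"

lemma q_iter: "(q ^^ l) w = w ^ (4 ^ l)"
  by (induction l arbitrary: w) (simp_all add: q_def power_mult[symmetric] mult.commute)

text \<open>Homogeneous lift of G_{alpha,eta}(z,w) = (lam z + alpha w + eta q^l(z), q^l(w)),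
 of degree d = 4^l (q^l is the l-th iterate of q, equal to z^(4^l), see q_iter).\<close>
definition G_hom :: "real \<Rightarrow> nat \<Rightarrow> complex \<Rightarrow> complex \<Rightarrow> hc \<Rightarrow> hc" where
  "G_hom lam l \<alpha> \<eta> = (\<lambda>(z, w, t). let d = 4 ^ l in
     (complex_of_real lam * z * t ^ (d - 1) + \<alpha> * w * t ^ (d - 1) + \<eta> * z ^ d,
      w ^ d, t ^ d))"

definition F_hom :: "real \<Rightarrow> nat \<Rightarrow> complex \<Rightarrow> hc \<Rightarrow> hc" where
  "F_hom lam' l' \<eta> = (\<lambda>(z, w, t). let d = 4 ^ l' in
     (complex_of_real lam' * z * t ^ (d - 1) + \<eta> * z ^ d, w ^ d, t ^ d))"

definition Psi :: "hc \<Rightarrow> hc" where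
  "Psi = (\<lambda>(z, w, t). (z, \<i> * w + t, \<i> * t + w))"

definition hscale :: "complex \<Rightarrow> hc \<Rightarrow> hc" where
  "hscale c = (\<lambda>(z, w, t). (c * z, c * w, c * t))"

text \<open>The full preimage in C^3 - {0} of the projectivisation of a set of triples.\<close>
definition proj_cone :: "hc set \<Rightarrow> hc set" where
  "proj_cone S = {hscale c v | c v. c \<noteq> 0 \<and> v \<in> S \<and> v \<noteq> 0}"

text \<open>Closure in P^2, expressed on preimages: since the quotient map
C^3-{0} -> P^2 is open, the preimage of the closure of [A] is closure(cone A) - {0}.\<close>
definition proj_closure :: "hc set \<Rightarrow> hc set" where
  "proj_closure S = closure (proj_cone S) - {0}"

definition U_rho :: "real \<Rightarrow> hc set" where
  "U_rho \<rho> = {(z, w, t). (z, w, t) \<noteq> 0 \<and> cmod z < \<rho> * max (cmod w) (cmod t)}"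

definition trapping :: "(hc \<Rightarrow> hc) \<Rightarrow> hc set \<Rightarrow> bool" where
  "trapping H U \<longleftrightarrow> proj_closure (H ` U) \<subseteq> U"

end

theory Submission
  imports Defs
begin

definition PP :: "real \<Rightarrow> hc \<Rightarrow> bool" where
  "PP r v = (case v of (z,w,t) \<Rightarrow> cmod z \<le> r * max (cmod w) (cmod t))"

lemma pow_bound:
  fixes z t w :: complex and M :: real
  assumes "cmod t \<le> M" shows "cmod (t ^ n) \<le> M ^ n"
  by (simp add: norm_power power_mono assms)

lemma G_step:
  assumes "0 \<le> r" "r \<le> 2" "cmod \<alpha> \<le> b" "cmod \<eta> \<le> b" "0 < lam" "PP r v"
  shows "PP (lam * r + b * (1 + 2 ^ (4^l))) (G_hom lam l \<alpha> \<eta> v)"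
proof -
  obtain z w t where v: "v = (z,w,t)" by (cases v) auto
  define d :: nat where "d = 4 ^ l"
  have d1: "d \<ge> 1" unfolding d_def by simp
  define M where "M = max (cmod w) (cmod t)"
  have M0: "M \<ge> 0" "cmod w \<le> M" "cmod t \<le> M" unfolding M_def by (auto simp: le_max_iff_disj)
  have b0: "b \<ge> 0" using assms(3) norm_ge_zero order_trans by blast
  have zM: "cmod z \<le> r * M" using assms(6) v unfolding PP_def M_def by simp
  have Md: "M ^ d = M * M ^ (d - 1)" using d1 by (metis Suc_diff_le diff_Suc_1 power_Suc)
  have td: "cmod (t ^ (d-1)) \<le> M ^ (d-1)" by (rule pow_bound[OF M0(3)])
  have e1: "cmod (complex_of_real lam * z * t ^ (d - 1)) \<le> lam * r * M ^ d"
  proof -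
    have "cmod (complex_of_real lam * z * t ^ (d - 1)) = lam * cmod z * cmod (t ^ (d-1))"
      using assms(5) by (simp add: norm_mult)
    also have "\<dots> \<le> lam * (r * M) * M ^ (d-1)"
      using zM td assms M0 by (intro mult_mono) auto
    finally show ?thesis using Md by (simp add: algebra_simps)
  qed
  have e2: "cmod (\<alpha> * w * t ^ (d - 1)) \<le> b * M ^ d"
  proof -
    have "cmod (\<alpha> * w * t ^ (d - 1)) = cmod \<alpha> * cmod w * cmod (t ^ (d-1))"
      by (simp add: norm_mult)
    also have "\<dots> \<le> b * M * M ^ (d-1)"
      using M0 td assms(3) b0 by (intro mult_mono) auto
    finally show ?thesis using Md by (simp add: algebra_simps)
  qed
  have e3: "cmod (\<eta> * z ^ d) \<le> b * 2 ^ d * M ^ d"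
  proof -
    have "cmod (\<eta> * z ^ d) = cmod \<eta> * cmod z ^ d" by (simp add: norm_mult norm_power)
    also have "\<dots> \<le> b * (2 * M) ^ d"
      using assms zM M0 b0 by (intro mult_mono power_mono) (auto intro: order_trans mult_right_mono)
    finally show ?thesis by (simp add: power_mult_distrib)
  qed
  have mx: "max (cmod (w ^ d)) (cmod (t ^ d)) = M ^ d"
  proof (cases "cmod w \<le> cmod t")
    case True
    then have "cmod w ^ d \<le> cmod t ^ d" by (simp add: power_mono)
    then show ?thesis using True unfolding M_def norm_power by (simp add: max_def)
  next
    case False
    then have "cmod t ^ d \<le> cmod w ^ d" by (simp add: power_mono)
    then show ?thesis using False unfolding M_def norm_power by (simp add: max_def)
  qed
  have "cmod (complex_of_real lam * z * t ^ (d - 1) + \<alpha> * w * t ^ (d - 1) + \<eta> * z ^ d)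
     \<le> lam * r * M ^ d + b * M ^ d + b * 2 ^ d * M ^ d"
    using e1 e2 e3 norm_triangle_le[OF add_mono] by (smt (verit) norm_triangle_ineq)
  also have "\<dots> = (lam * r + b * (1 + 2 ^ d)) * M ^ d" by (simp add: algebra_simps)
  finally show ?thesis unfolding PP_def G_hom_def v Let_def d_def[symmetric] using mx by simp
qed

lemma F_step:
  assumes "0 \<le> r" "r \<le> 2" "cmod \<eta> \<le> b" "0 < lam'" "PP r v"
  shows "PP (lam' * r + b * 2 ^ (4^l')) (F_hom lam' l' \<eta> v)"
proof -
  obtain z w t where v: "v = (z,w,t)" by (cases v) auto
  define d :: nat where "d = 4 ^ l'"
  have d1: "d \<ge> 1" unfolding d_def by simp
  define M where "M = max (cmod w) (cmod t)"
  have M0: "M \<ge> 0" "cmod w \<le> M" "cmod t \<le> M" unfolding M_def by (auto simp: le_max_iff_disj)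
  have b0: "b \<ge> 0" using assms(3) norm_ge_zero order_trans by blast
  have zM: "cmod z \<le> r * M" using assms(5) v unfolding PP_def M_def by simp
  have Md: "M ^ d = M * M ^ (d - 1)" using d1 by (metis Suc_diff_le diff_Suc_1 power_Suc)
  have td: "cmod (t ^ (d-1)) \<le> M ^ (d-1)" by (rule pow_bound[OF M0(3)])
  have e1: "cmod (complex_of_real lam' * z * t ^ (d - 1)) \<le> lam' * r * M ^ d"
  proof -
    have "cmod (complex_of_real lam' * z * t ^ (d - 1)) = lam' * cmod z * cmod (t ^ (d-1))"
      using assms(4) by (simp add: norm_mult)
    also have "\<dots> \<le> lam' * (r * M) * M ^ (d-1)"
      using zM td assms M0 by (intro mult_mono) auto
    finally show ?thesis using Md by (simp add: algebra_simps)
  qed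
  have e3: "cmod (\<eta> * z ^ d) \<le> b * 2 ^ d * M ^ d"
  proof -
    have "cmod (\<eta> * z ^ d) = cmod \<eta> * cmod z ^ d" by (simp add: norm_mult norm_power)
    also have "\<dots> \<le> b * (2 * M) ^ d"
      using assms zM M0 b0 by (intro mult_mono power_mono) (auto intro: order_trans mult_right_mono)
    finally show ?thesis by (simp add: power_mult_distrib)
  qed
  have mx: "max (cmod (w ^ d)) (cmod (t ^ d)) = M ^ d"
  proof (cases "cmod w \<le> cmod t")
    case True
    then have "cmod w ^ d \<le> cmod t ^ d" by (simp add: power_mono)
    then show ?thesis using True unfolding M_def norm_power by (simp add: max_def)
  next
    case False
    then have "cmod t ^ d \<le> cmod w ^ d" by (simp add: power_mono)
    then show ?thesis using False unfolding M_def norm_power by (simp add: max_def)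
  qed
  have "cmod (complex_of_real lam' * z * t ^ (d - 1) + \<eta> * z ^ d)
     \<le> lam' * r * M ^ d + b * 2 ^ d * M ^ d"
    using e1 e3 by (smt (verit) norm_triangle_ineq)
  also have "\<dots> = (lam' * r + b * 2 ^ d) * M ^ d" by (simp add: algebra_simps)
  finally show ?thesis unfolding PP_def F_hom_def v Let_def d_def[symmetric] using mx by simp
qed

lemma Psi_max:
  fixes w t :: complex
  shows "max (cmod w) (cmod t) \<le> max (cmod (\<i> * w + t)) (cmod (\<i> * t + w))"
proof -
  have sq: "cmod (\<i> * w + t) ^ 2 + cmod (\<i> * t + w) ^ 2 = 2 * (cmod w ^ 2 + cmod t ^ 2)"
    unfolding cmod_power2 by (simp add: power2_eq_square algebra_simps)
  define A where "A = max (cmod (\<i> * w + t)) (cmod (\<i> * t + w))"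
  have A0: "A \<ge> 0" unfolding A_def by (auto simp: le_max_iff_disj)
  have "cmod (\<i> * w + t) ^ 2 \<le> A ^ 2" "cmod (\<i> * t + w) ^ 2 \<le> A ^ 2"
    unfolding A_def by (auto intro: power_mono)
  then have "cmod w ^ 2 \<le> A ^ 2 \<and> cmod t ^ 2 \<le> A ^ 2"
    using sq zero_le_power2[of "cmod w"] zero_le_power2[of "cmod t"] by (smt (verit))
  then have "cmod w \<le> A" "cmod t \<le> A" using A0 power2_le_imp_le by blast+
  then show ?thesis unfolding A_def by simp
qed

lemma Psi_step:
  assumes "0 \<le> r" "PP r v" shows "PP r (Psi v)"
proof -
  obtain z w t where v: "v = (z,w,t)" by (cases v) auto
  have "cmod z \<le> r * max (cmod w) (cmod t)" using assms v unfolding PP_def by simp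
  also have "\<dots> \<le> r * max (cmod (\<i> * w + t)) (cmod (\<i> * t + w))"
    by (rule mult_left_mono[OF Psi_max assms(1)])
  finally show ?thesis unfolding PP_def Psi_def v by simp
qed

lemma G_iter:
  assumes "0 < lam" "lam < 1" "cmod \<alpha> \<le> b" "cmod \<eta> \<le> b"
    and c: "c = b * (1 + 2 ^ (4^l)) / (1 - lam)" "c \<le> 1" and "PP 1 v"
  shows "PP (lam ^ k + c) ((G_hom lam l \<alpha> \<eta> ^^ k) v)"
proof (induction k)
  case 0
  have b0: "b \<ge> 0" using assms(3) norm_ge_zero order_trans by blast
  have "c \<ge> 0" using c b0 assms by simp
  have "PP (1 + c) v"
  proof -
    obtain z w t where v: "v = (z,w,t)" by (cases v) auto
    have m0: "max (cmod w) (cmod t) \<ge> 0" by (simp add: le_max_iff_disj)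
    have "cmod z \<le> 1 * max (cmod w) (cmod t)" using assms(7) v unfolding PP_def by simp
    also have "\<dots> \<le> (1 + c) * max (cmod w) (cmod t)"
      using m0 \<open>c \<ge> 0\<close> by (intro mult_right_mono) auto
    finally show ?thesis unfolding PP_def v by simp
  qed
  then show ?case using assms by simp
next
  case (Suc k)
  have b0: "b \<ge> 0" using assms(3) norm_ge_zero order_trans by blast
  have "c \<ge> 0" using c b0 assms by simp
  have "lam ^ k \<le> 1" using assms by (simp add: power_le_one)
  have "PP (lam * (lam ^ k + c) + b * (1 + 2 ^ (4^l))) (G_hom lam l \<alpha> \<eta> ((G_hom lam l \<alpha> \<eta> ^^ k) v))"
    using Suc.IH assms(1-4) c(2) \<open>c \<ge> 0\<close> \<open>lam ^ k \<le> 1\<close> by (intro G_step) auto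
  moreover have "lam * (lam ^ k + c) + b * (1 + 2 ^ (4^l)) = lam ^ Suc k + c"
    using c assms by (simp add: field_simps)
  ultimately show ?case by simp
qed

lemma PP_closed: "closed {v. PP C v}"
proof -
  have "{v. PP C v} = {v. cmod (fst v) \<le> C * max (cmod (fst (snd v))) (cmod (snd (snd v)))}"
    by (auto simp: PP_def split: prod.splits)
  moreover have "closed {v::hc. cmod (fst v) \<le> C * max (cmod (fst (snd v))) (cmod (snd (snd v)))}"
    by (intro closed_Collect_le continuous_intros)
  ultimately show ?thesis by simp
qed

lemma PP_scale: "PP C v \<Longrightarrow> PP C (hscale c v)"
proof -
  assume a: "PP C v"
  obtain z w t where v: "v = (z,w,t)" by (cases v) auto
  have "cmod z \<le> C * max (cmod w) (cmod t)" using a v by (simp add: PP_def)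
  then have "cmod c * cmod z \<le> cmod c * (C * max (cmod w) (cmod t))"
    by (rule mult_left_mono) simp
  also have "\<dots> = C * (cmod c * max (cmod w) (cmod t))" by (simp add: algebra_simps)
  also have "cmod c * max (cmod w) (cmod t) = max (cmod c * cmod w) (cmod c * cmod t)"
    by (simp add: max_mult_distrib_left)
  finally show ?thesis by (simp add: PP_def hscale_def v norm_mult)
qed

lemma trap_from_PP:
  assumes "C < 1" "\<And>v. v \<in> U_rho 1 \<Longrightarrow> PP C (H v)"
  shows "trapping H (U_rho 1)"
proof -
  have "proj_cone (H ` U_rho 1) \<subseteq> {v. PP C v}"
    unfolding proj_cone_def using assms(2) PP_scale by blast
  then have "closure (proj_cone (H ` U_rho 1)) \<subseteq> {v. PP C v}"
    using PP_closed closure_minimal by blast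
  moreover have "{v. PP C v} - {0} \<subseteq> U_rho 1"
  proof
    fix v assume a: "v \<in> {v. PP C v} - {0}"
    obtain z w t where v: "v = (z,w,t)" by (cases v) auto
    have le: "cmod z \<le> C * max (cmod w) (cmod t)" and nz: "(z,w,t) \<noteq> 0" using a v by (auto simp: PP_def)
    show "v \<in> U_rho 1"
    proof (cases "max (cmod w) (cmod t) = 0")
      case True
      then have "w = 0" "t = 0" by (auto simp: max_def split: if_splits)
      moreover have "z = 0" using le True by simp
      ultimately show ?thesis using nz by (simp add: zero_prod_def)
    next
      case False
      then have "max (cmod w) (cmod t) > 0" by (simp add: le_max_iff_disj less_le)
      then have "C * max (cmod w) (cmod t) < 1 * max (cmod w) (cmod t)"
        using assms(1) by (intro mult_strict_right_mono) auto
      then show ?thesis using le nz v by (simp add: U_rho_def)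
    qed
  qed
  ultimately show ?thesis unfolding trapping_def proj_closure_def by blast
qed

theorem lemma6p3:
  fixes lam lam' :: real and l l' :: nat
  assumes "0 < lam" "lam < 1" "lam' > 1" "l \<ge> 1" "l' \<ge> 1"
  shows "\<exists>\<beta>1 > 0. \<exists>\<rho> > 0. \<exists>N \<ge> 1. \<forall>\<alpha> \<eta>.
           0 < cmod \<alpha> \<and> cmod \<alpha> < \<beta>1 \<and> 0 < cmod \<eta> \<and> cmod \<eta> < \<beta>1 \<longrightarrow>
           trapping (F_hom lam' l' \<eta> \<circ> Psi \<circ> (G_hom lam l \<alpha> \<eta> ^^ N)) (U_rho \<rho>)"
proof -
  define D :: real where "D = 1 + 2 ^ (4^l)"
  define D' :: real where "D' = 2 ^ (4^l')"
  have D0: "D > 0" "D' > 0" unfolding D_def D'_def by (auto simp: add_pos_pos)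
  obtain n where n: "lam ^ n < 1 / (4 * lam')"
    using real_arch_pow_inv[of "1 / (4 * lam')" lam] assms by auto
  define N where "N = Suc n"
  have lN: "lam ^ N \<le> lam ^ n" unfolding N_def using assms by (simp add: mult_left_le_one_le)
  have lN0: "lam ^ N \<ge> 0" using assms by simp
  define b where "b = min ((1 - lam) / (4 * lam' * D)) (1 / (4 * D'))"
  have b0: "b > 0" unfolding b_def using assms D0 by auto
  define c where "c = b * D / (1 - lam)"
  have c0: "c \<ge> 0" unfolding c_def using b0 D0 assms by simp
  have "b * D \<le> (1 - lam) / (4 * lam')"
  proof -
    have "b \<le> (1 - lam) / (4 * lam' * D)" unfolding b_def by simp
    then have "b * D \<le> (1 - lam) / (4 * lam' * D) * D" using D0 by (intro mult_right_mono) auto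
    also have "\<dots> = (1 - lam) / (4 * lam')" using D0 assms by (simp add: field_simps)
    finally show ?thesis .
  qed
  then have cle: "c \<le> 1 / (4 * lam')" unfolding c_def using assms
    by (simp add: divide_le_eq field_simps)
  have c1: "c \<le> 1" using cle assms by (smt (verit) divide_le_eq_1 le_divide_eq_1_pos)
  have bD': "b * D' \<le> 1 / 4"
  proof -
    have "b \<le> 1 / (4 * D')" unfolding b_def by simp
    then have "b * D' \<le> 1 / (4 * D') * D'" using D0 by (intro mult_right_mono) auto
    also have "\<dots> = 1 / 4" using D0 by simp
    finally show ?thesis .
  qed
  define C where "C = lam' * (lam ^ N + c) + b * D'"
  have "lam' * lam ^ N < 1 / 4"
  proof -
    have "lam' * lam ^ N \<le> lam' * lam ^ n" using lN assms by simp
    also have "\<dots> < lam' * (1 / (4 * lam'))" using n assms by (intro mult_strict_left_mono) auto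
    finally show ?thesis using assms by simp
  qed
  moreover have "lam' * c \<le> 1 / 4"
  proof -
    have "lam' * c \<le> lam' * (1 / (4 * lam'))" using cle assms by (intro mult_left_mono) auto
    then show ?thesis using assms by simp
  qed
  ultimately have C1: "C < 1" unfolding C_def using bD' by (simp add: algebra_simps)
  have r2: "lam ^ N + c \<le> 2" using c1 assms by (smt (verit) power_le_one)
  have main: "\<forall>\<alpha> \<eta>. 0 < cmod \<alpha> \<and> cmod \<alpha> < b \<and> 0 < cmod \<eta> \<and> cmod \<eta> < b \<longrightarrow>
           trapping (F_hom lam' l' \<eta> \<circ> Psi \<circ> (G_hom lam l \<alpha> \<eta> ^^ N)) (U_rho 1)"
  proof (intro allI impI)
    fix \<alpha> \<eta> :: complex
    assume h: "0 < cmod \<alpha> \<and> cmod \<alpha> < b \<and> 0 < cmod \<eta> \<and> cmod \<eta> < b"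
    show "trapping (F_hom lam' l' \<eta> \<circ> Psi \<circ> (G_hom lam l \<alpha> \<eta> ^^ N)) (U_rho 1)"
    proof (rule trap_from_PP[OF C1])
      fix v assume v: "v \<in> U_rho 1"
      have P1: "PP 1 v" using v unfolding U_rho_def PP_def by (auto split: prod.splits)
      have "PP (lam ^ N + c) ((G_hom lam l \<alpha> \<eta> ^^ N) v)"
        using h assms c1 P1 by (intro G_iter[where b=b]) (auto simp: c_def D_def)
      then have "PP (lam ^ N + c) (Psi ((G_hom lam l \<alpha> \<eta> ^^ N) v))"
        using lN0 c0 by (intro Psi_step) auto
      then have "PP (lam' * (lam ^ N + c) + b * 2 ^ (4^l')) (F_hom lam' l' \<eta> (Psi ((G_hom lam l \<alpha> \<eta> ^^ N) v)))"
        using lN0 c0 r2 h assms by (intro F_step) auto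
      then show "PP C ((F_hom lam' l' \<eta> \<circ> Psi \<circ> (G_hom lam l \<alpha> \<eta> ^^ N)) v)"
        unfolding C_def D'_def by simp
    qed
  qed
  have N1: "N \<ge> 1" unfolding N_def by simp
  show ?thesis
    apply (rule exI[of _ b])
    apply (rule conjI[OF b0])
    apply (rule exI[of _ 1])
    apply (rule conjI, simp)
    apply (rule exI[of _ N])
    using N1 main by simp
qed

end
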